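(* Let $G=(V_G,E_G)$ be a finite directed acyclic graph. There is a one-to-one correspondence between Bayesian networks based on $G$ and CDU functors $\mathsf{Free}(G)\to\mathsf{Stoch}$. Explicitly, a Bayesian network $(\tau,\{P(A\mid \mathrm{Pa}(A))\}_{A\in V_G})$ corresponds to the CDU functor $\mathcal F$ with $\mathcal F(A)=\tau(A)$ on generating objects and sending the generator $a\colon B_1\otimes\cdots\otimes B_k\to A$ to the stochastic matrix with entries $\mathcal F(a)^{j}_{i_1\ldots i_k}=P(A=j\mid \mathrm{Pa}(A)=(i_1,\ldots,i_k))$; conversely a CDU functor $\mathcal F$ determines the Bayesian network with $\tau(A)=\mathcal F(A)$ and $P(A=j\mid\mathrm{Pa}(A)=(i_1,\ldots,i_k))=\mathcal F(a)^j_{i_1\ldots i_k}$, and these two assignments are mutually inverse.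
   Context: $\mathsf{Stoch}$ is the symmetric monoidal category whose objects are finite (nonempty) sets and whose morphisms $f\colon A\to B$ are $|B|\times|A|$ matrices of nonnegative reals with every column summing to $1$ (entries written $f_i^j$, $i\in A$, $j\in B$); composition is matrix multiplication, the monoidal product is cartesian product on objects and Kronecker product on matrices, $I=\{*\}$, and the symmetry is the swap matrix. A CDU category is a symmetric monoidal category in which every object $A$ carries a copy map $A\to A\otimes A$, a discard map $A\to I$ and a uniform state $I\to A$, such that copy is coassociative, cocommutative and counital with respect to discard, and discard composed with the uniform state is the identity on $I$; the structure on $I$ is trivial and that on $A\otimes B$ is built componentwise from those on $A$ and $B$. In $\mathsf{Stoch}$ these are: copy $(\Delta)_i^{jk}=\delta_i^j\delta_i^k$, discard $(\epsilon)_i=1$, uniform $(u)^i=1/|A|$. A CDU functor is a symmetric monoidal functor between CDU categories preserving copy maps, discard maps and uniform states. For a set $X$ of generating objects and a set $\Sigma$ of typed generating morphisms $f\colon u\to w$ ($u,w\in X^\star$), the free CDU category $\mathsf{FreeCDU}(X,\Sigma)$ has objects the words $X^\star$ and morphisms the string diagrams built from $\Sigma$ and copy/discard/uniform maps on each $x\in X$, modulo the CDU equations above. For a dag $G$, $\mathsf{Free}(G):=\mathsf{FreeCDU}(V_G,\Sigma_G)$ where $\Sigma_G$ contains, for each node $A$ with parents $B_1,\ldots,B_k$ (in a fixed order), one generator $a\colon B_1\otimes\cdots\otimes B_k\to A$. A Bayesian network based on $G$ consists of an assignment of a finite set $\tau(A)$ to each node $A\in V_G$ together with, for each $A$, a conditional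 probability distribution $P(A\mid\mathrm{Pa}(A))$ of values in $\tau(A)$ given values in $\tau(B_1)\times\cdots\times\tau(B_k)$ of the parents. *)

theory Defs
  imports Complex_Main
begin

text \<open>A dag is given by a finite vertex set V and, for every node A, the list pa A of
its parents B_1, ..., B_k in a fixed order; the edges are B -> A for B in set (pa A).\<close>

definition dag_edges :: "'v set \<Rightarrow> ('v \<Rightarrow> 'v list) \<Rightarrow> ('v \<times> 'v) set" where
  "dag_edges V pa = {(b, a). a \<in> V \<and> b \<in> set (pa a)}"

definition is_dag :: "'v set \<Rightarrow> ('v \<Rightarrow> 'v list) \<Rightarrow> bool" where
  "is_dag V pa \<longleftrightarrow> finite V \<and> (\<forall>a\<in>V. set (pa a) \<subseteq> V \<and> distinct (pa a))
      \<and> acyclic (dag_edges V pa)"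

datatype 'v diag =
    Gen 'v
  | Idw "'v list"
  | Comp "'v diag" "'v diag"    \<comment> \<open>Comp d e = first d, then e\<close>
  | Tens "'v diag" "'v diag"
  | Sw "'v list" "'v list"
  | Cp 'v
  | Dc 'v
  | Unif 'v

fun ddom :: "('v \<Rightarrow> 'v list) \<Rightarrow> 'v diag \<Rightarrow> 'v list" and
    dcod :: "('v \<Rightarrow> 'v list) \<Rightarrow> 'v diag \<Rightarrow> 'v list" where
  "ddom pa (Gen a) = pa a"
| "ddom pa (Idw u) = u"
| "ddom pa (Comp d e) = ddom pa d"
| "ddom pa (Tens d e) = ddom pa d @ ddom pa e"
| "ddom pa (Sw u w) = u @ w"
| "ddom pa (Cp x) = [x]"
| "ddom pa (Dc x) = [x]"
| "ddom pa (Unif x) = []"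
| "dcod pa (Gen a) = [a]"
| "dcod pa (Idw u) = u"
| "dcod pa (Comp d e) = dcod pa e"
| "dcod pa (Tens d e) = dcod pa d @ dcod pa e"
| "dcod pa (Sw u w) = w @ u"
| "dcod pa (Cp x) = [x, x]"
| "dcod pa (Dc x) = []"
| "dcod pa (Unif x) = [x]"

fun wfd :: "'v set \<Rightarrow> ('v \<Rightarrow> 'v list) \<Rightarrow> 'v diag \<Rightarrow> bool" where
  "wfd V pa (Gen a) = (a \<in> V)"
| "wfd V pa (Idw u) = (set u \<subseteq> V)"
| "wfd V pa (Comp d e) = (wfd V pa d \<and> wfd V pa e \<and> dcod pa d = ddom pa e)"
| "wfd V pa (Tens d e) = (wfd V pa d \<and> wfd V pa e)"
| "wfd V pa (Sw u w) = (set u \<subseteq> V \<and> set w \<subseteq> V)"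
| "wfd V pa (Cp x) = (x \<in> V)"
| "wfd V pa (Dc x) = (x \<in> V)"
| "wfd V pa (Unif x) = (x \<in> V)"

inductive cdu_ax :: "('v \<Rightarrow> 'v list) \<Rightarrow> 'v diag \<Rightarrow> 'v diag \<Rightarrow> bool" for pa where
  id_l: "cdu_ax pa (Comp (Idw (ddom pa d)) d) d"
| id_r: "cdu_ax pa (Comp d (Idw (dcod pa d))) d"
| comp_assoc: "cdu_ax pa (Comp (Comp d e) f) (Comp d (Comp e f))"
| tens_assoc: "cdu_ax pa (Tens (Tens d e) f) (Tens d (Tens e f))"
| tens_unit_l: "cdu_ax pa (Tens (Idw []) d) d"
| tens_unit_r: "cdu_ax pa (Tens d (Idw [])) d"
| tens_id: "cdu_ax pa (Tens (Idw u) (Idw w)) (Idw (u @ w))"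
| interchange: "cdu_ax pa (Comp (Tens d1 d2) (Tens e1 e2)) (Tens (Comp d1 e1) (Comp d2 e2))"
| sw_nat: "cdu_ax pa (Comp (Tens d e) (Sw (dcod pa d) (dcod pa e)))
                     (Comp (Sw (ddom pa d) (ddom pa e)) (Tens e d))"
| sw_hex: "cdu_ax pa (Sw u (w @ v)) (Comp (Tens (Sw u w) (Idw v)) (Tens (Idw w) (Sw u v)))"
| sw_inv: "cdu_ax pa (Comp (Sw u w) (Sw w u)) (Idw (u @ w))"
| sw_unit: "cdu_ax pa (Sw [] u) (Idw u)"
| coassoc: "cdu_ax pa (Comp (Cp x) (Tens (Cp x) (Idw [x]))) (Comp (Cp x) (Tens (Idw [x]) (Cp x)))"
| cocomm: "cdu_ax pa (Comp (Cp x) (Sw [x] [x])) (Cp x)"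
| counit: "cdu_ax pa (Comp (Cp x) (Tens (Dc x) (Idw [x]))) (Idw [x])"
| disc_unif: "cdu_ax pa (Comp (Unif x) (Dc x)) (Idw [])"

text \<open>Equality of morphisms in Free(G): the congruence generated by the axioms on
well-formed diagrams.\<close>

inductive cdu_eqv :: "'v set \<Rightarrow> ('v \<Rightarrow> 'v list) \<Rightarrow> 'v diag \<Rightarrow> 'v diag \<Rightarrow> bool"
  for V pa where
  ax: "cdu_ax pa d e \<Longrightarrow> wfd V pa d \<Longrightarrow> wfd V pa e \<Longrightarrow> ddom pa d = ddom pa e
        \<Longrightarrow> dcod pa d = dcod pa e \<Longrightarrow> cdu_eqv V pa d e"
| refl: "wfd V pa d \<Longrightarrow> cdu_eqv V pa d d"
| sym: "cdu_eqv V pa d e \<Longrightarrow> cdu_eqv V pa e d"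
| trans: "cdu_eqv V pa d e \<Longrightarrow> cdu_eqv V pa e f \<Longrightarrow> cdu_eqv V pa d f"
| comp_cong: "cdu_eqv V pa d d' \<Longrightarrow> cdu_eqv V pa e e' \<Longrightarrow> dcod pa d = ddom pa e
        \<Longrightarrow> cdu_eqv V pa (Comp d e) (Comp d' e')"
| tens_cong: "cdu_eqv V pa d d' \<Longrightarrow> cdu_eqv V pa e e' \<Longrightarrow> cdu_eqv V pa (Tens d e) (Tens d' e')"

text \<open>The object F(x_1...x_n) is the cartesian product F(x_1) x ... x F(x_n), represented
as the set of tuples (lists).  A morphism is a function f with f i j = f_i^j.\<close>

definition tuples :: "('v \<Rightarrow> 'a set) \<Rightarrow> 'v list \<Rightarrow> 'a list set" where
  "tuples F u = {is. length is = length u \<and> (\<forall>k<length u. is ! k \<in> F (u ! k))}"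

definition stoch_mat :: "'a list set \<Rightarrow> 'a list set \<Rightarrow> ('a list \<Rightarrow> 'a list \<Rightarrow> real) \<Rightarrow> bool" where
  "stoch_mat A B f \<longleftrightarrow> (\<forall>i\<in>A. (\<forall>j\<in>B. 0 \<le> f i j) \<and> (\<Sum>j\<in>B. f i j) = 1)"

definition cdu_functor :: "'v set \<Rightarrow> ('v \<Rightarrow> 'v list) \<Rightarrow> ('v \<Rightarrow> 'a set)
      \<Rightarrow> ('v diag \<Rightarrow> 'a list \<Rightarrow> 'a list \<Rightarrow> real) \<Rightarrow> bool" where
  "cdu_functor V pa Fo Fm \<longleftrightarrow>
     (\<forall>x\<in>V. finite (Fo x) \<and> Fo x \<noteq> {}) \<and>
     (\<forall>d. wfd V pa d \<longrightarrow> stoch_mat (tuples Fo (ddom pa d)) (tuples Fo (dcod pa d)) (Fm d)) \<and>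
     \<comment> \<open>well defined on morphisms of Free(G)\<close>
     (\<forall>d e. cdu_eqv V pa d e \<longrightarrow>
        (\<forall>i\<in>tuples Fo (ddom pa d). \<forall>j\<in>tuples Fo (dcod pa d). Fm d i j = Fm e i j)) \<and>
     \<comment> \<open>functoriality\<close>
     (\<forall>u. set u \<subseteq> V \<longrightarrow> (\<forall>i\<in>tuples Fo u. \<forall>j\<in>tuples Fo u.
        Fm (Idw u) i j = (if i = j then 1 else 0))) \<and>
     (\<forall>d e. wfd V pa (Comp d e) \<longrightarrow>
        (\<forall>i\<in>tuples Fo (ddom pa d). \<forall>k\<in>tuples Fo (dcod pa e).
          Fm (Comp d e) i k = (\<Sum>j\<in>tuples Fo (dcod pa d). Fm d i j * Fm e j k))) \<and>
     \<comment> \<open>(strict) monoidality\<close>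
     (\<forall>d e. wfd V pa (Tens d e) \<longrightarrow>
        (\<forall>i\<in>tuples Fo (ddom pa (Tens d e)). \<forall>j\<in>tuples Fo (dcod pa (Tens d e)).
          Fm (Tens d e) i j =
            Fm d (take (length (ddom pa d)) i) (take (length (dcod pa d)) j)
            * Fm e (drop (length (ddom pa d)) i) (drop (length (dcod pa d)) j))) \<and>
     \<comment> \<open>preservation of the symmetry\<close>
     (\<forall>u w. set u \<subseteq> V \<and> set w \<subseteq> V \<longrightarrow>
        (\<forall>i\<in>tuples Fo (u @ w). \<forall>j\<in>tuples Fo (w @ u).
          Fm (Sw u w) i j = (if j = drop (length u) i @ take (length u) i then 1 else 0))) \<and>
     \<comment> \<open>preservation of copy, discard and uniform maps\<close>
     (\<forall>x\<in>V. \<forall>i\<in>Fo x. \<forall>j\<in>Fo x. \<forall>k\<in>Fo x.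
        Fm (Cp x) [i] [j, k] = (if i = j \<and> i = k then 1 else 0)) \<and>
     (\<forall>x\<in>V. \<forall>i\<in>Fo x. Fm (Dc x) [i] [] = 1) \<and>
     (\<forall>x\<in>V. \<forall>j\<in>Fo x. Fm (Unif x) [] [j] = 1 / real (card (Fo x)))"

definition functor_eq :: "'v set \<Rightarrow> ('v \<Rightarrow> 'v list) \<Rightarrow> ('v \<Rightarrow> 'a set)
      \<Rightarrow> ('v diag \<Rightarrow> 'a list \<Rightarrow> 'a list \<Rightarrow> real) \<Rightarrow> ('v \<Rightarrow> 'a set)
      \<Rightarrow> ('v diag \<Rightarrow> 'a list \<Rightarrow> 'a list \<Rightarrow> real) \<Rightarrow> bool" where
  "functor_eq V pa Fo Fm Fo' Fm' \<longleftrightarrow> (\<forall>x\<in>V. Fo x = Fo' x) \<and>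
     (\<forall>d. wfd V pa d \<longrightarrow> (\<forall>i\<in>tuples Fo (ddom pa d). \<forall>j\<in>tuples Fo (dcod pa d).
        Fm d i j = Fm' d i j))"

text \<open>tau A is the finite set of values of A; P A is j = P(A = j | Pa(A) = is).\<close>

definition bayes_net :: "'v set \<Rightarrow> ('v \<Rightarrow> 'v list) \<Rightarrow> ('v \<Rightarrow> 'a set)
      \<Rightarrow> ('v \<Rightarrow> 'a list \<Rightarrow> 'a \<Rightarrow> real) \<Rightarrow> bool" where
  "bayes_net V pa \<tau> P \<longleftrightarrow> (\<forall>A\<in>V. finite (\<tau> A) \<and> \<tau> A \<noteq> {} \<and>
     (\<forall>is\<in>tuples \<tau> (pa A). (\<forall>j\<in>\<tau> A. 0 \<le> P A is j) \<and> (\<Sum>j\<in>\<tau> A. P A is j) = 1))"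

definition bn_eq :: "'v set \<Rightarrow> ('v \<Rightarrow> 'v list) \<Rightarrow> ('v \<Rightarrow> 'a set) \<Rightarrow> ('v \<Rightarrow> 'a list \<Rightarrow> 'a \<Rightarrow> real)
      \<Rightarrow> ('v \<Rightarrow> 'a set) \<Rightarrow> ('v \<Rightarrow> 'a list \<Rightarrow> 'a \<Rightarrow> real) \<Rightarrow> bool" where
  "bn_eq V pa \<tau> P \<tau>' P' \<longleftrightarrow> (\<forall>A\<in>V. \<tau> A = \<tau>' A \<and>
     (\<forall>is\<in>tuples \<tau> (pa A). \<forall>j\<in>\<tau> A. P A is j = P' A is j))"

definition bn_of_functor :: "('v diag \<Rightarrow> 'a list \<Rightarrow> 'a list \<Rightarrow> real) \<Rightarrow> 'v \<Rightarrow> 'a list \<Rightarrow> 'a \<Rightarrow> real" where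
  "bn_of_functor Fm A is j = Fm (Gen A) is [j]"

end

theory Submission imports Defs begin

lemma tuples_Nil[simp]: "tuples F [] = {[]}"
  by (auto simp: tuples_def)

lemma mem_tuples_Cons: "(i \<in> tuples F (x # u)) = (\<exists>a r. i = a # r \<and> a \<in> F x \<and> r \<in> tuples F u)"
proof
  assume "i \<in> tuples F (x # u)"
  then show "\<exists>a r. i = a # r \<and> a \<in> F x \<and> r \<in> tuples F u"
    by (cases i) (auto simp: tuples_def)
next
  assume "\<exists>a r. i = a # r \<and> a \<in> F x \<and> r \<in> tuples F u"
  then show "i \<in> tuples F (x # u)"
    by (auto simp: tuples_def nth_Cons split: nat.splits)
qed

lemma Cons_in_tuples[simp]: "(a # r \<in> tuples F (x # u)) = (a \<in> F x \<and> r \<in> tuples F u)"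
  by (simp add: mem_tuples_Cons)

lemma tuples_length: "i \<in> tuples F u \<Longrightarrow> length i = length u"
  by (simp add: tuples_def)

lemma tuples_Cons: "tuples F (x # u) = (\<lambda>(a, r). a # r) ` (F x \<times> tuples F u)"
  by (auto simp: mem_tuples_Cons)

lemma tuples_single: "tuples F [x] = (\<lambda>a. [a]) ` F x"
  by (auto simp: mem_tuples_Cons)

lemma finite_tuples: "(\<forall>x\<in>set u. finite (F x)) \<Longrightarrow> finite (tuples F u)"
  by (induction u) (auto simp: tuples_Cons)

lemma mem_tuples_append: "(i \<in> tuples F (u @ w)) =
   (\<exists>a b. i = a @ b \<and> a \<in> tuples F u \<and> b \<in> tuples F w)"
proof (induction u arbitrary: i)
  case Nil then show ?case by simp
next
  case (Cons x u)
  show ?case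
  proof
    assume "i \<in> tuples F ((x # u) @ w)"
    then obtain c r where "i = c # r" "c \<in> F x" "r \<in> tuples F (u @ w)"
      by (auto simp: mem_tuples_Cons)
    with Cons obtain a b where "r = a @ b" "a \<in> tuples F u" "b \<in> tuples F w" by blast
    then show "\<exists>a b. i = a @ b \<and> a \<in> tuples F (x # u) \<and> b \<in> tuples F w"
      using \<open>i = c # r\<close> \<open>c \<in> F x\<close> by (intro exI[of _ "c # a"] exI[of _ b]) simp
  next
    assume "\<exists>a b. i = a @ b \<and> a \<in> tuples F (x # u) \<and> b \<in> tuples F w"
    then obtain a b where "i = a @ b" "a \<in> tuples F (x # u)" "b \<in> tuples F w" by blast
    then obtain c r where "a = c # r" "c \<in> F x" "r \<in> tuples F u" by (auto simp: mem_tuples_Cons)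
    then show "i \<in> tuples F ((x # u) @ w)"
      using Cons \<open>i = a @ b\<close> \<open>b \<in> tuples F w\<close> by auto
  qed
qed

lemma append_in_tuples: "a \<in> tuples F u \<Longrightarrow> b \<in> tuples F w \<Longrightarrow> a @ b \<in> tuples F (u @ w)"
  by (auto simp: mem_tuples_append)

lemma tuples_take_drop:
  assumes "i \<in> tuples F (u @ w)"
  shows "take (length u) i \<in> tuples F u" "drop (length u) i \<in> tuples F w"
proof -
  obtain a b where "i = a @ b" "a \<in> tuples F u" "b \<in> tuples F w" using assms by (auto simp: mem_tuples_append)
  moreover have "length a = length u" using \<open>a \<in> tuples F u\<close> by (rule tuples_length)
  ultimately show "take (length u) i \<in> tuples F u" "drop (length u) i \<in> tuples F w" by auto
qed

lemma tuples_append_img: "tuples F (u @ w) = (\<lambda>(a, b). a @ b) ` (tuples F u \<times> tuples F w)"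
  unfolding set_eq_iff mem_tuples_append image_iff by force

lemma sum_tuples_append:
  "(\<Sum>j\<in>tuples F (u @ w). f j) = (\<Sum>a\<in>tuples F u. \<Sum>b\<in>tuples F w. f (a @ b))"
proof -
  have inj: "inj_on (\<lambda>(a, b). a @ b) (tuples F u \<times> tuples F w)"
    proof (rule inj_onI, clarify)
    fix x y xa ya assume "x \<in> tuples F u" "xa \<in> tuples F u" "x @ y = xa @ ya"
    then have "length x = length xa" by (simp add: tuples_length)
    with \<open>x @ y = xa @ ya\<close> show "x = xa \<and> y = ya" by simp
  qed
  show ?thesis
    unfolding tuples_append_img sum.reindex[OF inj] sum.cartesian_product
    by (simp add: case_prod_beta)
qed

lemma if1_mult: "(if c then 1 else 0) * (x::real) = (if c then x else 0)" by simp
lemma mult_if1: "(x::real) * (if c then 1 else 0) = (if c then x else 0)" by simp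

lemma tuples_appendE:
  assumes "i \<in> tuples F (u @ w)"
  obtains a b where "i = a @ b" "a \<in> tuples F u" "b \<in> tuples F w" "length a = length u" "length b = length w"
  using assms by (auto simp: mem_tuples_append dest: tuples_length)

lemma sum_single:
  assumes "finite S" "jz \<in> S" "\<And>j. j \<in> S \<Longrightarrow> j \<noteq> jz \<Longrightarrow> f j = 0"
  shows "sum f S = f jz"
proof -
  have "sum f S = f jz + sum f (S - {jz})" using assms by (simp add: sum.remove)
  also have "sum f (S - {jz}) = 0" using assms by (intro sum.neutral) auto
  finally show ?thesis by simp
qed

lemma wfd_set:
  assumes "\<forall>a\<in>V. set (pa a) \<subseteq> V"
  shows "wfd V pa d \<Longrightarrow> set (ddom pa d) \<subseteq> V \<and> set (dcod pa d) \<subseteq> V"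
  using assms by (induction d) auto

lemma eqv_props: "cdu_eqv V pa d e \<Longrightarrow>
   wfd V pa d \<and> wfd V pa e \<and> ddom pa d = ddom pa e \<and> dcod pa d = dcod pa e"
  by (induction rule: cdu_eqv.induct) auto

fun sem :: "('v \<Rightarrow> 'a set) \<Rightarrow> ('v \<Rightarrow> 'a list \<Rightarrow> 'a \<Rightarrow> real) \<Rightarrow> ('v \<Rightarrow> 'v list) \<Rightarrow> 'v diag
   \<Rightarrow> 'a list \<Rightarrow> 'a list \<Rightarrow> real" where
  "sem \<tau> P pa (Gen a) i j = P a i (hd j)"
| "sem \<tau> P pa (Idw u) i j = (if i = j then 1 else 0)"
| "sem \<tau> P pa (Comp d e) i k =
     (\<Sum>j\<in>tuples \<tau> (dcod pa d). sem \<tau> P pa d i j * sem \<tau> P pa e j k)"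
| "sem \<tau> P pa (Tens d e) i j =
     sem \<tau> P pa d (take (length (ddom pa d)) i) (take (length (dcod pa d)) j)
     * sem \<tau> P pa e (drop (length (ddom pa d)) i) (drop (length (dcod pa d)) j)"
| "sem \<tau> P pa (Sw u w) i j = (if j = drop (length u) i @ take (length u) i then 1 else 0)"
| "sem \<tau> P pa (Cp x) i j = (if j = [hd i, hd i] then 1 else 0)"
| "sem \<tau> P pa (Dc x) i j = 1"
| "sem \<tau> P pa (Unif x) i j = 1 / real (card (\<tau> x))"

context
  fixes V :: "'v set" and pa :: "'v \<Rightarrow> 'v list" and \<tau> :: "'v \<Rightarrow> 'a set" and P
  assumes dag: "is_dag V pa" and bn: "bayes_net V pa \<tau> P"
begin

abbreviation "S \<equiv> sem \<tau> P pa"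

lemma paV: "\<forall>a\<in>V. set (pa a) \<subseteq> V" using dag by (simp add: is_dag_def)

lemma tauf: "x \<in> V \<Longrightarrow> finite (\<tau> x) \<and> \<tau> x \<noteq> {}" using bn by (simp add: bayes_net_def)

lemma fin: "set u \<subseteq> V \<Longrightarrow> finite (tuples \<tau> u)"
  using tauf by (intro finite_tuples) auto

lemma finD: "wfd V pa d \<Longrightarrow> finite (tuples \<tau> (ddom pa d)) \<and> finite (tuples \<tau> (dcod pa d))"
  using wfd_set[OF paV] fin by blast

lemma sem_stoch: "wfd V pa d \<Longrightarrow> i \<in> tuples \<tau> (ddom pa d) \<Longrightarrow>
   (\<forall>j\<in>tuples \<tau> (dcod pa d). 0 \<le> S d i j) \<and> (\<Sum>j\<in>tuples \<tau> (dcod pa d). S d i j) = 1"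
proof (induction d arbitrary: i)
  case (Gen a)
  have inj: "inj_on (\<lambda>x. [x]) (\<tau> a)" by (simp add: inj_on_def)
  show ?case using Gen bn unfolding bayes_net_def
    by (auto simp: tuples_single sum.reindex[OF inj])
next
  case (Idw u)
  then show ?case using fin by auto
next
  case (Comp d e)
  have fd: "finite (tuples \<tau> (dcod pa d))" "finite (tuples \<tau> (dcod pa e))" using Comp.prems finD by auto
  have nn: "\<forall>j\<in>tuples \<tau> (dcod pa d). 0 \<le> S d i j" using Comp by auto
  have nn2: "\<forall>j\<in>tuples \<tau> (dcod pa d). \<forall>k\<in>tuples \<tau> (dcod pa e). 0 \<le> S e j k" using Comp by auto
  have "(\<Sum>k\<in>tuples \<tau> (dcod pa e). \<Sum>j\<in>tuples \<tau> (dcod pa d). S d i j * S e j k)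
      = (\<Sum>j\<in>tuples \<tau> (dcod pa d). S d i j * (\<Sum>k\<in>tuples \<tau> (dcod pa e). S e j k))"
    by (subst sum.swap) (simp add: sum_distrib_left)
  also have "\<dots> = (\<Sum>j\<in>tuples \<tau> (dcod pa d). S d i j)"
    using Comp by (intro sum.cong) auto
  also have "\<dots> = 1" using Comp by auto
  finally show ?case using nn nn2 by (auto intro!: sum_nonneg)
next
  case (Tens d e)
  let ?i1 = "take (length (ddom pa d)) i" and ?i2 = "drop (length (ddom pa d)) i"
  have i12: "?i1 \<in> tuples \<tau> (ddom pa d)" "?i2 \<in> tuples \<tau> (ddom pa e)"
    using Tens.prems tuples_take_drop by auto
  have A: "(\<forall>j\<in>tuples \<tau> (dcod pa d). 0 \<le> S d ?i1 j) \<and> (\<Sum>j\<in>tuples \<tau> (dcod pa d). S d ?i1 j) = 1"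
    using Tens i12 by auto
  have B: "(\<forall>j\<in>tuples \<tau> (dcod pa e). 0 \<le> S e ?i2 j) \<and> (\<Sum>j\<in>tuples \<tau> (dcod pa e). S e ?i2 j) = 1"
    using Tens i12 by auto
  have "(\<Sum>j\<in>tuples \<tau> (dcod pa (Tens d e)). S (Tens d e) i j)
     = (\<Sum>a\<in>tuples \<tau> (dcod pa d). \<Sum>b\<in>tuples \<tau> (dcod pa e). S d ?i1 a * S e ?i2 b)"
    by (simp add: sum_tuples_append tuples_length cong: sum.cong)
  also have "\<dots> = (\<Sum>j\<in>tuples \<tau> (dcod pa d). S d ?i1 j) * (\<Sum>j\<in>tuples \<tau> (dcod pa e). S e ?i2 j)"
    by (simp add: sum_product)
  moreover have "\<forall>j\<in>tuples \<tau> (dcod pa (Tens d e)). 0 \<le> S (Tens d e) i j"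
  proof
    fix j assume "j \<in> tuples \<tau> (dcod pa (Tens d e))"
    then have "take (length (dcod pa d)) j \<in> tuples \<tau> (dcod pa d)" "drop (length (dcod pa d)) j \<in> tuples \<tau> (dcod pa e)"
      using tuples_take_drop by auto
    then show "0 \<le> S (Tens d e) i j" using A B by simp
  qed
  ultimately show ?case using A B by simp
next
  case (Sw u w)
  then have "drop (length u) i @ take (length u) i \<in> tuples \<tau> (w @ u)"
    using tuples_take_drop[of i \<tau> u w] append_in_tuples by auto
  then show ?case using Sw fin by auto
next
  case (Cp x)
  then obtain a where "i = [a]" "a \<in> \<tau> x" by (auto simp: tuples_single)
  then show ?case using Cp fin by auto
next
  case (Dc x)
  then show ?case by simp
next
  case (Unif x)
  have inj: "inj_on (\<lambda>x. [x]) (\<tau> x)" by (simp add: inj_on_def)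
  have "card (tuples \<tau> [x]) = card (\<tau> x)" by (simp add: tuples_single card_image[OF inj])
  then show ?case using Unif tauf by simp
qed


lemma cp_comp: "x \<in> V \<Longrightarrow> a \<in> \<tau> x \<Longrightarrow> S (Comp (Cp x) g) [a] k = S g [a, a] k"
  unfolding sem.simps(3) dcod.simps
  by (rule HOL.trans[OF sum_single[where jz = "[a, a]"]]) (use fin in auto)

lemma ax_sound:
  assumes "cdu_ax pa d e" "wfd V pa d" "wfd V pa e" "ddom pa d = ddom pa e" "dcod pa d = dcod pa e"
    "i \<in> tuples \<tau> (ddom pa d)" "k \<in> tuples \<tau> (dcod pa d)"
  shows "S d i k = S e i k"
  using assms(1)
proof (induction rule: cdu_ax.cases)
  case (id_l d0)
  then show ?thesis using assms finD[of d0] by (simp add: if1_mult mult_if1)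
next
  case (id_r d0)
  then show ?thesis using assms finD[of d0] by (simp add: if1_mult mult_if1)
next
  case (comp_assoc d1 d2 d3)
  let ?A = "tuples \<tau> (dcod pa d1)" and ?B = "tuples \<tau> (dcod pa d2)"
  have "(\<Sum>j\<in>?B. (\<Sum>l\<in>?A. S d1 i l * S d2 l j) * S d3 j k)
      = (\<Sum>j\<in>?B. \<Sum>l\<in>?A. S d1 i l * S d2 l j * S d3 j k)"
    by (simp add: sum_distrib_right)
  also have "\<dots> = (\<Sum>l\<in>?A. \<Sum>j\<in>?B. S d1 i l * S d2 l j * S d3 j k)"
    by (rule sum.swap)
  also have "\<dots> = (\<Sum>l\<in>?A. S d1 i l * (\<Sum>j\<in>?B. S d2 l j * S d3 j k))"
    by (simp add: sum_distrib_left mult.assoc)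
  finally show ?thesis using comp_assoc by simp
next
  case (tens_assoc d1 d2 d3)
  then show ?thesis by (simp add: drop_take mult.assoc add.commute)
next
  case (tens_unit_l d0)
  then show ?thesis by simp
next
  case (tens_unit_r d0)
  then show ?thesis using assms by (simp add: tuples_length)
next
  case (tens_id u w)
  obtain a b where i: "i = a @ b" "length a = length u" "length b = length w"
    using assms(6) tens_id by (auto elim: tuples_appendE)
  obtain a' b' where k: "k = a' @ b'" "length a' = length u" "length b' = length w"
    using assms(7) tens_id by (auto elim: tuples_appendE)
  show ?thesis using tens_id i k by simp
next
  case (interchange d1 d2 e1 e2)
  have c1: "dcod pa d1 = ddom pa e1" and c2: "dcod pa d2 = ddom pa e2"
    using assms(3) interchange by auto
  obtain i1 i2 where i: "i = i1 @ i2" "length i1 = length (ddom pa d1)" "length i2 = length (ddom pa d2)"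
    using assms(6) interchange by (auto elim: tuples_appendE)
  obtain k1 k2 where k: "k = k1 @ k2" "length k1 = length (dcod pa e1)" "length k2 = length (dcod pa e2)"
    using assms(7) interchange by (auto elim: tuples_appendE)
  let ?A = "tuples \<tau> (dcod pa d1)" and ?B = "tuples \<tau> (dcod pa d2)"
  have "S d i k = (\<Sum>a\<in>?A. \<Sum>b\<in>?B. S d1 i1 a * S d2 i2 b * (S e1 a k1 * S e2 b k2))"
    using interchange i k c1 c2 by (simp add: sum_tuples_append tuples_length cong: sum.cong)
  also have "\<dots> = (\<Sum>a\<in>?A. S d1 i1 a * S e1 a k1) * (\<Sum>b\<in>?B. S d2 i2 b * S e2 b k2)"
    by (simp add: sum_product ac_simps)
  also have "\<dots> = S e i k" using interchange i k c1 c2 by simp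
  finally show ?thesis .
next
  case (sw_nat d0 e0)
  obtain i1 i2 where i: "i = i1 @ i2" "length i1 = length (ddom pa d0)" "length i2 = length (ddom pa e0)"
    using assms(6) sw_nat by (auto elim: tuples_appendE)
  obtain k2 k1 where k: "k = k2 @ k1" "k2 \<in> tuples \<tau> (dcod pa e0)" "k1 \<in> tuples \<tau> (dcod pa d0)"
     "length k2 = length (dcod pa e0)" "length k1 = length (dcod pa d0)"
    using assms(7) sw_nat by (auto elim: tuples_appendE)
  have i': "i2 \<in> tuples \<tau> (ddom pa e0)" "i1 \<in> tuples \<tau> (ddom pa d0)"
    using assms(6) sw_nat i tuples_take_drop[of i \<tau> "ddom pa d0" "ddom pa e0"] by auto
  have fd: "finite (tuples \<tau> (dcod pa d0 @ dcod pa e0))" "finite (tuples \<tau> (ddom pa e0 @ ddom pa d0))"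
    using assms(2,3) sw_nat wfd_set[OF paV, of d0] wfd_set[OF paV, of e0] by (auto intro!: fin)
  have "S d i k = S d0 i1 k1 * S e0 i2 k2"
    unfolding sw_nat sem.simps ddom.simps dcod.simps
  proof (subst sum_single[where jz = "k1 @ k2"])
    show "k1 @ k2 \<in> tuples \<tau> (dcod pa d0 @ dcod pa e0)" using k by (simp add: append_in_tuples)
  next
    fix j assume j: "j \<in> tuples \<tau> (dcod pa d0 @ dcod pa e0)" "j \<noteq> k1 @ k2"
    then obtain a b where "j = a @ b" "length a = length (dcod pa d0)" "length b = length (dcod pa e0)"
      by (auto elim: tuples_appendE)
    then show "S d0 (take (length (ddom pa d0)) i) (take (length (dcod pa d0)) j) *
          S e0 (drop (length (ddom pa d0)) i) (drop (length (dcod pa d0)) j) *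
          (if k = drop (length (dcod pa d0)) j @ take (length (dcod pa d0)) j then 1 else 0) = 0"
      using j k by auto
  qed (use fd i k in auto)
  also have "\<dots> = S e i k"
    unfolding sw_nat sem.simps ddom.simps dcod.simps
  proof (subst sum_single[where jz = "i2 @ i1"])
    show "i2 @ i1 \<in> tuples \<tau> (ddom pa e0 @ ddom pa d0)" using i' by (simp add: append_in_tuples)
  qed (use fd i k in auto)
  finally show ?thesis .
next
  case (sw_hex u w v)
  have sV: "set u \<subseteq> V" "set w \<subseteq> V" "set v \<subseteq> V" using assms(2) sw_hex by auto
  obtain a r where ar: "i = a @ r" "a \<in> tuples \<tau> u" "r \<in> tuples \<tau> (w @ v)" "length a = length u"
    using assms(6) sw_hex by (auto elim: tuples_appendE)
  obtain b c where bc: "r = b @ c" "b \<in> tuples \<tau> w" "c \<in> tuples \<tau> v" "length b = length w" "length c = length v"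
    using ar by (auto elim: tuples_appendE)
  have k3: "k \<in> tuples \<tau> ((w @ v) @ u)" using assms(7) sw_hex by simp
  obtain r' a' where ar': "k = r' @ a'" "r' \<in> tuples \<tau> (w @ v)" "length a' = length u"
    using k3 by (rule tuples_appendE)
  obtain b' c' where bc': "r' = b' @ c'" "length b' = length w" "length c' = length v"
    using ar' by (auto elim: tuples_appendE)
  have fd: "finite (tuples \<tau> ((w @ u) @ v))" using sV by (intro fin) auto
  have "S e i k = S (Tens (Sw u w) (Idw v)) i ((b @ a) @ c) * S (Tens (Idw w) (Sw u v)) ((b @ a) @ c) k"
    unfolding sw_hex sem.simps(3) ddom.simps dcod.simps
  proof (rule sum_single)
    show "(b @ a) @ c \<in> tuples \<tau> ((w @ u) @ v)" using ar bc by (simp add: append_in_tuples)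
  next
    fix j assume j: "j \<in> tuples \<tau> ((w @ u) @ v)" "j \<noteq> (b @ a) @ c"
    from j(1) obtain xy z where "j = xy @ z" "xy \<in> tuples \<tau> (w @ u)" "length z = length v"
      by (rule tuples_appendE)
    moreover then obtain x y where "xy = x @ y" "length x = length w" "length y = length u"
      by (auto elim: tuples_appendE)
    ultimately show "S (Tens (Sw u w) (Idw v)) i j * S (Tens (Idw w) (Sw u v)) j k = 0"
      using j ar bc ar' bc' by auto
  qed (use fd in auto)
  also have "\<dots> = S d i k" using sw_hex ar bc ar' bc' by auto
  finally show ?thesis by simp
next
  case (sw_inv u w)
  have sV: "set u \<subseteq> V" "set w \<subseteq> V" using assms(2) sw_inv by auto
  obtain a b where ab: "i = a @ b" "a \<in> tuples \<tau> u" "b \<in> tuples \<tau> w" "length a = length u" "length b = length w"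
    using assms(6) sw_inv by (auto elim: tuples_appendE)
  obtain a' b' where ab': "k = a' @ b'" "length a' = length u" "length b' = length w"
    using assms(7) sw_inv by (auto elim: tuples_appendE)
  have fd: "finite (tuples \<tau> (w @ u))" using sV by (intro fin) auto
  have "S d i k = S (Sw u w) i (b @ a) * S (Sw w u) (b @ a) k"
    unfolding sw_inv sem.simps(3) ddom.simps dcod.simps
  proof (rule sum_single)
    show "b @ a \<in> tuples \<tau> (w @ u)" using ab by (simp add: append_in_tuples)
  qed (use fd ab in auto)
  also have "\<dots> = S e i k" using sw_inv ab ab' by auto
  finally show ?thesis .
next
  case (sw_unit u)
  then show ?thesis by simp
next
  case (coassoc x)
  have xV: "x \<in> V" using assms(2) coassoc by auto
  obtain a where a: "i = [a]" "a \<in> \<tau> x" using assms(6) coassoc by (auto simp: tuples_single)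
  obtain b c f where k: "k = [b, c, f]" using assms(7) coassoc by (force simp: mem_tuples_Cons)
  show ?thesis unfolding coassoc a(1) k cp_comp[OF xV a(2)] by simp
next
  case (cocomm x)
  have xV: "x \<in> V" using assms(2) cocomm by auto
  obtain a where a: "i = [a]" "a \<in> \<tau> x" using assms(6) cocomm by (auto simp: tuples_single)
  obtain b c where k: "k = [b, c]" using assms(7) cocomm by (force simp: mem_tuples_Cons)
  show ?thesis unfolding cocomm a(1) k cp_comp[OF xV a(2)] by simp
next
  case (counit x)
  have xV: "x \<in> V" using assms(2) counit by auto
  obtain a where a: "i = [a]" "a \<in> \<tau> x" using assms(6) counit by (auto simp: tuples_single)
  obtain b where k: "k = [b]" using assms(7) counit by (force simp: mem_tuples_Cons)
  show ?thesis unfolding counit a(1) k cp_comp[OF xV a(2)] by simp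
next
  case (disc_unif x)
  have xV: "x \<in> V" using assms(2) disc_unif by auto
  have inj: "inj_on (\<lambda>x. [x]) (\<tau> x)" by (simp add: inj_on_def)
  have "card (tuples \<tau> [x]) = card (\<tau> x)" by (simp add: tuples_single card_image[OF inj])
  then show ?thesis using disc_unif tauf[OF xV] assms(6,7) by simp
qed


lemma eqv_sound: "cdu_eqv V pa d e \<Longrightarrow>
   \<forall>i\<in>tuples \<tau> (ddom pa d). \<forall>k\<in>tuples \<tau> (dcod pa d). S d i k = S e i k"
proof (induction rule: cdu_eqv.induct)
  case (ax d e)
  then show ?case using ax_sound by blast
next
  case (refl d)
  then show ?case by simp
next
  case (sym d e)
  then show ?case using eqv_props[OF sym.hyps] by simp
next
  case (trans d e f)
  then show ?case using eqv_props[OF trans.hyps(1)] by simp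
next
  case (comp_cong d d' e e')
  have p1: "dcod pa d' = dcod pa d" "ddom pa d' = ddom pa d" using eqv_props[OF comp_cong.hyps(1)] by auto
  have p2: "ddom pa e = dcod pa d" "dcod pa e' = dcod pa e" using eqv_props[OF comp_cong.hyps(2)] comp_cong.hyps(3) by auto
  show ?case
  proof (intro ballI)
    fix i k assume i: "i \<in> tuples \<tau> (ddom pa (Comp d e))" and k: "k \<in> tuples \<tau> (dcod pa (Comp d e))"
    show "S (Comp d e) i k = S (Comp d' e') i k"
      unfolding sem.simps p1 using comp_cong.IH i k p2 by (intro sum.cong) auto
  qed
next
  case (tens_cong d d' e e')
  have p1: "dcod pa d' = dcod pa d" "ddom pa d' = ddom pa d" using eqv_props[OF tens_cong.hyps(1)] by auto
  show ?case
  proof (intro ballI)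
    fix i k assume i: "i \<in> tuples \<tau> (ddom pa (Tens d e))" and k: "k \<in> tuples \<tau> (dcod pa (Tens d e))"
    have "take (length (ddom pa d)) i \<in> tuples \<tau> (ddom pa d)" "drop (length (ddom pa d)) i \<in> tuples \<tau> (ddom pa e)"
      "take (length (dcod pa d)) k \<in> tuples \<tau> (dcod pa d)" "drop (length (dcod pa d)) k \<in> tuples \<tau> (dcod pa e)"
      using i k tuples_take_drop by auto
    then show "S (Tens d e) i k = S (Tens d' e') i k"
      unfolding sem.simps p1 using tens_cong.IH by simp
  qed
qed

lemma sem_functor: "cdu_functor V pa \<tau> S"
  unfolding cdu_functor_def
proof (intro conjI)
  show "\<forall>x\<in>V. finite (\<tau> x) \<and> \<tau> x \<noteq> {}" using tauf by blast
  show "\<forall>d. wfd V pa d \<longrightarrow> stoch_mat (tuples \<tau> (ddom pa d)) (tuples \<tau> (dcod pa d)) (S d)"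
    unfolding stoch_mat_def using sem_stoch by blast
  show "\<forall>d e. cdu_eqv V pa d e \<longrightarrow>
        (\<forall>i\<in>tuples \<tau> (ddom pa d). \<forall>j\<in>tuples \<tau> (dcod pa d). S d i j = S e i j)"
    using eqv_sound by blast
qed simp_all

lemma sem_bn: "bn_eq V pa \<tau> P \<tau> (bn_of_functor S)"
  by (simp add: bn_eq_def bn_of_functor_def)

end

lemma functor_bn:
  assumes "cdu_functor V pa Fo Fm"
  shows "bayes_net V pa Fo (bn_of_functor Fm)"
  unfolding bayes_net_def
proof
  fix A assume A: "A \<in> V"
  have f: "finite (Fo A)" "Fo A \<noteq> {}" using assms A by (auto simp: cdu_functor_def)
  have st: "stoch_mat (tuples Fo (pa A)) (tuples Fo [A]) (Fm (Gen A))"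
    using assms A unfolding cdu_functor_def by (metis wfd.simps(1) ddom.simps(1) dcod.simps(1))
  have inj: "inj_on (\<lambda>x. [x]) (Fo A)" by (simp add: inj_on_def)
  have "\<forall>is\<in>tuples Fo (pa A). (\<forall>j\<in>Fo A. 0 \<le> bn_of_functor Fm A is j) \<and> (\<Sum>j\<in>Fo A. bn_of_functor Fm A is j) = 1"
    using st by (auto simp: stoch_mat_def tuples_single sum.reindex[OF inj] bn_of_functor_def)
  then show "finite (Fo A) \<and> Fo A \<noteq> {} \<and> (\<forall>is\<in>tuples Fo (pa A). (\<forall>j\<in>Fo A. 0 \<le> bn_of_functor Fm A is j) \<and> (\<Sum>j\<in>Fo A. bn_of_functor Fm A is j) = 1)"
    using f by blast
qed

lemma tuples_cong: "\<forall>x\<in>V. Fo x = Fo' x \<Longrightarrow> set u \<subseteq> V \<Longrightarrow> tuples Fo u = tuples Fo' u"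
  unfolding tuples_def by (auto simp: subset_iff)

lemma cf_idw_raw: "cdu_functor V pa Fo Fm \<Longrightarrow> \<forall>u. set u \<subseteq> V \<longrightarrow> (\<forall>i\<in>tuples Fo u. \<forall>j\<in>tuples Fo u.         Fm (Idw u) i j = (if i = j then 1 else 0))"
  unfolding cdu_functor_def by (elim conjE) assumption

lemma cf_idw: "cdu_functor V pa Fo Fm \<Longrightarrow> set u \<subseteq> V \<Longrightarrow> i \<in> tuples Fo u \<Longrightarrow> j \<in> tuples Fo u \<Longrightarrow>
  Fm (Idw u) i j = (if i = j then 1 else 0)"
  using cf_idw_raw by blast

lemma cf_comp_raw: "cdu_functor V pa Fo Fm \<Longrightarrow> \<forall>d e. wfd V pa (Comp d e) \<longrightarrow>         (\<forall>i\<in>tuples Fo (ddom pa d). \<forall>k\<in>tuples Fo (dcod pa e).           Fm (Comp d e) i k = (\<Sum>j\<in>tuples Fo (dcod pa d). Fm d i j * Fm e j k))"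
  unfolding cdu_functor_def by (elim conjE) assumption

lemma cf_comp: "cdu_functor V pa Fo Fm \<Longrightarrow> wfd V pa (Comp d e) \<Longrightarrow> i \<in> tuples Fo (ddom pa d) \<Longrightarrow>
  k \<in> tuples Fo (dcod pa e) \<Longrightarrow> Fm (Comp d e) i k = (\<Sum>j\<in>tuples Fo (dcod pa d). Fm d i j * Fm e j k)"
  using cf_comp_raw by blast

lemma cf_tens_raw: "cdu_functor V pa Fo Fm \<Longrightarrow> \<forall>d e. wfd V pa (Tens d e) \<longrightarrow>         (\<forall>i\<in>tuples Fo (ddom pa (Tens d e)). \<forall>j\<in>tuples Fo (dcod pa (Tens d e)).           Fm (Tens d e) i j =             Fm d (take (length (ddom pa d)) i) (take (length (dcod pa d)) j)             * Fm e (drop (length (ddom pa d)) i) (drop (length (dcod pa d)) j))"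
  unfolding cdu_functor_def by (elim conjE) assumption

lemma cf_tens: "cdu_functor V pa Fo Fm \<Longrightarrow> wfd V pa (Tens d e) \<Longrightarrow> i \<in> tuples Fo (ddom pa (Tens d e)) \<Longrightarrow>
  j \<in> tuples Fo (dcod pa (Tens d e)) \<Longrightarrow> Fm (Tens d e) i j =
            Fm d (take (length (ddom pa d)) i) (take (length (dcod pa d)) j)
            * Fm e (drop (length (ddom pa d)) i) (drop (length (dcod pa d)) j)"
  using cf_tens_raw by blast

lemma cf_sw_raw: "cdu_functor V pa Fo Fm \<Longrightarrow> \<forall>u w. set u \<subseteq> V \<and> set w \<subseteq> V \<longrightarrow>         (\<forall>i\<in>tuples Fo (u @ w). \<forall>j\<in>tuples Fo (w @ u).           Fm (Sw u w) i j = (if j = drop (length u) i @ take (length u) i then 1 else 0))"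
  unfolding cdu_functor_def by (elim conjE) assumption

lemma cf_sw: "cdu_functor V pa Fo Fm \<Longrightarrow> set u \<subseteq> V \<Longrightarrow> set w \<subseteq> V \<Longrightarrow> i \<in> tuples Fo (u @ w) \<Longrightarrow>
  j \<in> tuples Fo (w @ u) \<Longrightarrow> Fm (Sw u w) i j = (if j = drop (length u) i @ take (length u) i then 1 else 0)"
  using cf_sw_raw by blast

lemma cf_cp_raw: "cdu_functor V pa Fo Fm \<Longrightarrow> \<forall>x\<in>V. \<forall>i\<in>Fo x. \<forall>j\<in>Fo x. \<forall>k\<in>Fo x.         Fm (Cp x) [i] [j, k] = (if i = j \<and> i = k then 1 else 0)"
  unfolding cdu_functor_def by (elim conjE) assumption

lemma cf_cp: "cdu_functor V pa Fo Fm \<Longrightarrow> x \<in> V \<Longrightarrow> i \<in> Fo x \<Longrightarrow> j \<in> Fo x \<Longrightarrow> k \<in> Fo x \<Longrightarrow>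
  Fm (Cp x) [i] [j, k] = (if i = j \<and> i = k then 1 else 0)"
  using cf_cp_raw by blast

lemma cf_dc_raw: "cdu_functor V pa Fo Fm \<Longrightarrow> \<forall>x\<in>V. \<forall>i\<in>Fo x. Fm (Dc x) [i] [] = 1"
  unfolding cdu_functor_def by (elim conjE) assumption

lemma cf_dc: "cdu_functor V pa Fo Fm \<Longrightarrow> x \<in> V \<Longrightarrow> i \<in> Fo x \<Longrightarrow> Fm (Dc x) [i] [] = 1"
  using cf_dc_raw by blast

lemma cf_unif_raw: "cdu_functor V pa Fo Fm \<Longrightarrow> \<forall>x\<in>V. \<forall>j\<in>Fo x. Fm (Unif x) [] [j] = 1 / real (card (Fo x))"
  unfolding cdu_functor_def by (elim conjE) assumption

lemma cf_unif: "cdu_functor V pa Fo Fm \<Longrightarrow> x \<in> V \<Longrightarrow> j \<in> Fo x \<Longrightarrow> Fm (Unif x) [] [j] = 1 / real (card (Fo x))"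
  using cf_unif_raw by blast

lemma functor_unique:
  assumes dag: "is_dag V pa" and F: "cdu_functor V pa Fo Fm" and F': "cdu_functor V pa Fo' Fm'"
    and eq: "bn_eq V pa Fo (bn_of_functor Fm) Fo' (bn_of_functor Fm')"
  shows "functor_eq V pa Fo Fm Fo' Fm'"
proof -
  have paV: "\<forall>a\<in>V. set (pa a) \<subseteq> V" using dag by (simp add: is_dag_def)
  have ob: "\<forall>x\<in>V. Fo x = Fo' x" using eq by (simp add: bn_eq_def)
  have tc: "\<And>u. set u \<subseteq> V \<Longrightarrow> tuples Fo' u = tuples Fo u" using tuples_cong[OF ob] by simp
  have "wfd V pa d \<Longrightarrow> \<forall>i\<in>tuples Fo (ddom pa d). \<forall>j\<in>tuples Fo (dcod pa d). Fm d i j = Fm' d i j" for d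
  proof (induction d)
    case (Gen a)
    then show ?case using eq by (auto simp: bn_eq_def bn_of_functor_def tuples_single)
  next
    case (Idw u)
    then show ?case using cf_idw[OF F] cf_idw[OF F'] tc[of u] by simp
  next
    case (Comp d e)
    have sV: "set (dcod pa d) \<subseteq> V" "set (ddom pa d) \<subseteq> V" "set (dcod pa e) \<subseteq> V"
      using wfd_set[OF paV, of d] wfd_set[OF paV, of e] Comp.prems by auto
    show ?case
    proof (intro ballI)
      fix i k assume i: "i \<in> tuples Fo (ddom pa (Comp d e))" and k: "k \<in> tuples Fo (dcod pa (Comp d e))"
      have "Fm (Comp d e) i k = (\<Sum>j\<in>tuples Fo (dcod pa d). Fm d i j * Fm e j k)"
        using cf_comp[OF F Comp.prems] i k by simp
      also have "\<dots> = (\<Sum>j\<in>tuples Fo (dcod pa d). Fm' d i j * Fm' e j k)"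
        using Comp i k by (intro sum.cong) auto
      also have "\<dots> = Fm' (Comp d e) i k"
        using cf_comp[OF F' Comp.prems] i k tc sV by simp
      finally show "Fm (Comp d e) i k = Fm' (Comp d e) i k" .
    qed
  next
    case (Tens d e)
    have sV: "set (dcod pa d) \<subseteq> V" "set (ddom pa d) \<subseteq> V" "set (dcod pa e) \<subseteq> V" "set (ddom pa e) \<subseteq> V"
      using wfd_set[OF paV, of d] wfd_set[OF paV, of e] Tens.prems by auto
    show ?case
    proof (intro ballI)
      fix i k assume i: "i \<in> tuples Fo (ddom pa (Tens d e))" and k: "k \<in> tuples Fo (dcod pa (Tens d e))"
      have m: "take (length (ddom pa d)) i \<in> tuples Fo (ddom pa d)" "drop (length (ddom pa d)) i \<in> tuples Fo (ddom pa e)"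
        "take (length (dcod pa d)) k \<in> tuples Fo (dcod pa d)" "drop (length (dcod pa d)) k \<in> tuples Fo (dcod pa e)"
        using i k tuples_take_drop by auto
      have i': "i \<in> tuples Fo' (ddom pa (Tens d e))" and k': "k \<in> tuples Fo' (dcod pa (Tens d e))"
        using i k tc sV by auto
      have "Fm (Tens d e) i k = Fm d (take (length (ddom pa d)) i) (take (length (dcod pa d)) k)
            * Fm e (drop (length (ddom pa d)) i) (drop (length (dcod pa d)) k)"
        by (rule cf_tens[OF F Tens.prems i k])
      also have "\<dots> = Fm' d (take (length (ddom pa d)) i) (take (length (dcod pa d)) k)
            * Fm' e (drop (length (ddom pa d)) i) (drop (length (dcod pa d)) k)"
        using Tens m by auto
      also have "\<dots> = Fm' (Tens d e) i k"
        by (rule cf_tens[OF F' Tens.prems i' k', symmetric])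
      finally show "Fm (Tens d e) i k = Fm' (Tens d e) i k" .
    qed
  next
    case (Sw u w)
    then show ?case using cf_sw[OF F] cf_sw[OF F'] tc[of "u @ w"] tc[of "w @ u"] by simp
  next
    case (Cp x)
    then show ?case using cf_cp[OF F] cf_cp[OF F'] ob by (auto simp: mem_tuples_Cons)
  next
    case (Dc x)
    then show ?case using cf_dc[OF F] cf_dc[OF F'] ob by (auto simp: mem_tuples_Cons)
  next
    case (Unif x)
    then show ?case using cf_unif[OF F] cf_unif[OF F'] ob by (auto simp: mem_tuples_Cons)
  qed
  then show ?thesis using ob by (simp add: functor_eq_def)
qed

theorem proposition2:
  fixes V :: "'v set" and pa :: "'v \<Rightarrow> 'v list"
  assumes "is_dag V pa"
  shows "(\<forall>(\<tau> :: 'v \<Rightarrow> 'a set) P. bayes_net V pa \<tau> P \<longrightarrow>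
            (\<exists>Fm. cdu_functor V pa \<tau> Fm \<and> bn_eq V pa \<tau> P \<tau> (bn_of_functor Fm)))
       \<and> (\<forall>(Fo :: 'v \<Rightarrow> 'a set) Fm. cdu_functor V pa Fo Fm \<longrightarrow>
            bayes_net V pa Fo (bn_of_functor Fm))
       \<and> (\<forall>(Fo :: 'v \<Rightarrow> 'a set) Fm Fo' Fm'. cdu_functor V pa Fo Fm \<and> cdu_functor V pa Fo' Fm'
            \<and> bn_eq V pa Fo (bn_of_functor Fm) Fo' (bn_of_functor Fm')
            \<longrightarrow> functor_eq V pa Fo Fm Fo' Fm')"
proof (intro conjI allI impI)
  fix \<tau> :: "'v \<Rightarrow> 'a set" and P assume "bayes_net V pa \<tau> P"
  then show "\<exists>Fm. cdu_functor V pa \<tau> Fm \<and> bn_eq V pa \<tau> P \<tau> (bn_of_functor Fm)"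
    using sem_functor[OF assms] sem_bn[OF assms] by blast
next
  fix Fo :: "'v \<Rightarrow> 'a set" and Fm assume "cdu_functor V pa Fo Fm"
  then show "bayes_net V pa Fo (bn_of_functor Fm)" by (rule functor_bn)
next
  fix Fo Fo' :: "'v \<Rightarrow> 'a set" and Fm Fm'
  assume "cdu_functor V pa Fo Fm \<and> cdu_functor V pa Fo' Fm' \<and> bn_eq V pa Fo (bn_of_functor Fm) Fo' (bn_of_functor Fm')"
  then show "functor_eq V pa Fo Fm Fo' Fm'" using functor_unique[OF assms] by blast
qed

end
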